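(* Let $\mathfrak{g}$ be a finite-dimensional real Lie algebra and let $((\Lambda^3\mathfrak{g})^{\mathfrak{g}})^\circ\subset(\Lambda^3\mathfrak{g})^*$ be the annihilator of $(\Lambda^3\mathfrak{g})^{\mathfrak{g}}$. The functions $f_\upsilon:r\in\Lambda^2\mathfrak{g}\mapsto\upsilon([r,r])\in\mathbb{R}$, $\upsilon\in((\Lambda^3\mathfrak{g})^{\mathfrak{g}})^\circ$, span a linear Darboux family for $V_{\mathfrak{g}}$ on $\Lambda^2\mathfrak{g}$ whose locus is the set $\mathcal{Y}_{\mathfrak{g}}$ of solutions of the modified classical Yang–Baxter equation. Moreover, the functions $r\mapsto\xi([r,r])$, $\xi\in(\Lambda^3\mathfrak{g})^*$ (i.e. the components of $[r,r]$ in any basis of $\Lambda^3\mathfrak{g}$), span a linear Darboux family for $V_{\mathfrak{g}}$ on $\Lambda^2\mathfrak{g}$ whose locus is the set of solutions of the classical Yang–Baxter equation $[r,r]=0$.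
   Context: $[\cdot,\cdot]$ is the algebraic Schouten bracket on $\Lambda\mathfrak{g}$. $(\Lambda^m\mathfrak{g})^{\mathfrak{g}}=\{w\in\Lambda^m\mathfrak{g}:[v,w]=0\ \forall v\in\mathfrak{g}\}$. The modified classical Yang–Baxter equation (mCYBE) for $r\in\Lambda^2\mathfrak{g}$ is $[r,r]\in(\Lambda^3\mathfrak{g})^{\mathfrak{g}}$; its solutions are called $r$-matrices and form $\mathcal{Y}_{\mathfrak{g}}$. $V_{\mathfrak{g}}$ is the Lie algebra of fundamental vector fields of the action $T\mapsto\Lambda^2T$ of $\mathrm{Aut}(\mathfrak{g})$ on $\Lambda^2\mathfrak{g}$, namely $w\mapsto(\Lambda^2d)(w)$ for $d\in\mathfrak{der}(\mathfrak{g})$, where $\Lambda^2d(a\wedge b)=da\wedge b+a\wedge db$. A Darboux family for a Lie algebra $V$ of vector fields on $M$ is a finite-dimensional space $\mathcal{A}=\langle f_1,\dots,f_s\rangle$ of smooth functions with $Xf_j=\sum_i h^i_{jX}f_i$, $h^i_{jX}\in C^\infty(M)$, for all $X\in V$; it is linear if the cofactors can be taken constant; its locus is the common zero set of its elements. *)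

theory Defs
  imports "HOL-Analysis.Analysis"
begin

text \<open>A finite-dimensional real Lie algebra is modelled as real^'n (standard basis
 axis i 1 = e_i) with a bilinear, antisymmetric bracket satisfying Jacobi.\<close>

definition lie_algebra :: "(real^'n \<Rightarrow> real^'n \<Rightarrow> real^'n) \<Rightarrow> bool" where
  "lie_algebra br \<longleftrightarrow> bilinear br \<and> (\<forall>x y. br x y = - br y x) \<and>
     (\<forall>x y z. br x (br y z) + br y (br z x) + br z (br x y) = 0)"

definition sc :: "(real^'n \<Rightarrow> real^'n \<Rightarrow> real^'n) \<Rightarrow> 'n \<Rightarrow> 'n \<Rightarrow> 'n \<Rightarrow> real" where
  "sc br i j k = br (axis i 1) (axis j 1) $ k"

text \<open>r = sum_{i<j} r$i$j e_i\<and>e_j  and  w = sum_{a<b<c} w$a$b$c e_a\<and>e_b\<and>e_c,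
 with antisymmetric coefficient tensors.\<close>

definition Lam2 :: "(real^'n^'n) set" where
  "Lam2 = {r. \<forall>i j. r$i$j = - r$j$i}"

definition Lam3 :: "(real^'n^'n^'n) set" where
  "Lam3 = {w. \<forall>a b c. w$a$b$c = - w$b$a$c \<and> w$a$b$c = - w$a$c$b}"

text \<open>Algebraic Schouten bracket [r,r] of a bivector with itself (convention
 [x\<and>y,u\<and>v] = [x,u]\<and>y\<and>v - [x,v]\<and>y\<and>u - [y,u]\<and>x\<and>v + [y,v]\<and>x\<and>u),
 which gives [r,r] = sum_{i,j,k,l} r^{ij} r^{kl} [e_i,e_k]\<and>e_j\<and>e_l.\<close>

definition schouten_pre :: "(real^'n \<Rightarrow> real^'n \<Rightarrow> real^'n) \<Rightarrow> real^'n^'n \<Rightarrow> 'n \<Rightarrow> 'n \<Rightarrow> 'n \<Rightarrow> real" where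
  "schouten_pre br r m j l = (\<Sum>i\<in>UNIV. \<Sum>k\<in>UNIV. sc br i k m * r$i$j * r$k$l)"

definition schouten_rr :: "(real^'n \<Rightarrow> real^'n \<Rightarrow> real^'n) \<Rightarrow> real^'n^'n \<Rightarrow> real^'n^'n^'n" where
  "schouten_rr br r = (\<chi> a b c. schouten_pre br r a b c - schouten_pre br r b a c
      - schouten_pre br r a c b - schouten_pre br r c b a
      + schouten_pre br r b c a + schouten_pre br r c a b)"

text \<open>Schouten bracket [v,w] of v in g with w in Lam^3 g (adjoint action, a derivation).\<close>

definition schouten_13 :: "(real^'n \<Rightarrow> real^'n \<Rightarrow> real^'n) \<Rightarrow> real^'n \<Rightarrow> real^'n^'n^'n \<Rightarrow> real^'n^'n^'n" where
  "schouten_13 br v w = (\<chi> a b c. \<Sum>d\<in>UNIV.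
       br v (axis d 1) $ a * w$d$b$c + br v (axis d 1) $ b * w$a$d$c + br v (axis d 1) $ c * w$a$b$d)"

definition inv3 :: "(real^'n \<Rightarrow> real^'n \<Rightarrow> real^'n) \<Rightarrow> (real^'n^'n^'n) set" where
  "inv3 br = {w \<in> Lam3. \<forall>v. schouten_13 br v w = 0}"

text \<open>Annihilator of a subset of Lam^3: linear functionals vanishing on it
 (every functional on Lam^3 is the restriction of a linear functional on all tensors).\<close>
definition annihilator :: "(real^'n^'n^'n) set \<Rightarrow> (real^'n^'n^'n \<Rightarrow> real) set" where
  "annihilator S = {u. linear u \<and> (\<forall>w\<in>S. u w = 0)}"

definition r_matrices :: "(real^'n \<Rightarrow> real^'n \<Rightarrow> real^'n) \<Rightarrow> (real^'n^'n) set" where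
  "r_matrices br = {r \<in> Lam2. schouten_rr br r \<in> inv3 br}"

definition derivations :: "(real^'n \<Rightarrow> real^'n \<Rightarrow> real^'n) \<Rightarrow> (real^'n \<Rightarrow> real^'n) set" where
  "derivations br = {d. linear d \<and> (\<forall>x y. d (br x y) = br (d x) y + br x (d y))}"

text \<open>Lam^2 d (a\<and>b) = d a \<and> b + a \<and> d b, in coefficients.\<close>
definition wedge2 :: "(real^'n \<Rightarrow> real^'n) \<Rightarrow> real^'n^'n \<Rightarrow> real^'n^'n" where
  "wedge2 d r = (\<chi> i j. \<Sum>k\<in>UNIV. d (axis k 1) $ i * r$k$j + d (axis k 1) $ j * r$i$k)"

definition Vg :: "(real^'n \<Rightarrow> real^'n \<Rightarrow> real^'n) \<Rightarrow> (real^'n^'n \<Rightarrow> real^'n^'n) set" where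
  "Vg br = {(\<lambda>r. wedge2 d r) | d. d \<in> derivations br}"

fun Ck_on :: "nat \<Rightarrow> 'v::real_normed_vector set \<Rightarrow> ('v \<Rightarrow> real) \<Rightarrow> bool" where
  "Ck_on 0 M f = continuous_on M f"
| "Ck_on (Suc k) M f = (\<exists>f'. (\<forall>x\<in>M. (f has_derivative f' x) (at x within M)) \<and>
                              (\<forall>v\<in>M. Ck_on k M (\<lambda>x. f' x v)))"

definition smooth_on :: "'v::real_normed_vector set \<Rightarrow> ('v \<Rightarrow> real) \<Rightarrow> bool" where
  "smooth_on M f \<longleftrightarrow> (\<forall>k. Ck_on k M f)"

definition lie_deriv :: "('v::real_normed_vector \<Rightarrow> 'v) \<Rightarrow> ('v \<Rightarrow> real) \<Rightarrow> 'v \<Rightarrow> real" where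
  "lie_deriv X f x = deriv (\<lambda>t. f (x + t *\<^sub>R X x)) 0"

definition linear_darboux_family ::
  "'v::real_normed_vector set \<Rightarrow> ('v \<Rightarrow> 'v) set \<Rightarrow> ('v \<Rightarrow> real) set \<Rightarrow> bool" where
  "linear_darboux_family M V A \<longleftrightarrow> (\<exists>fs :: ('v \<Rightarrow> real) list.
      A = {(\<lambda>x. \<Sum>i<length fs. a i * (fs!i) x) | a. True} \<and>
      (\<forall>f\<in>set fs. smooth_on M f) \<and>
      (\<forall>X\<in>V. \<forall>j<length fs. \<exists>h :: nat \<Rightarrow> real.
          \<forall>x\<in>M. lie_deriv X (fs!j) x = (\<Sum>i<length fs. h i * (fs!i) x)))"

definition locus :: "'v set \<Rightarrow> ('v \<Rightarrow> real) set \<Rightarrow> 'v set" where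
  "locus M A = {x\<in>M. \<forall>f\<in>A. f x = 0}"

end

theory Submission imports Defs begin

definition PP :: "('n \<Rightarrow> 'n \<Rightarrow> 'n \<Rightarrow> real) \<Rightarrow> real^'n^'n \<Rightarrow> real^'n^'n \<Rightarrow> 'n \<Rightarrow> 'n \<Rightarrow> 'n \<Rightarrow> real" where
  "PP c x y m j l = (\<Sum>i\<in>UNIV. \<Sum>k\<in>UNIV. c i k m * x$i$j * y$k$l)"

definition Wm :: "('n \<Rightarrow> 'n \<Rightarrow> real) \<Rightarrow> real^'n^'n \<Rightarrow> real^'n^'n" where
  "Wm M x = (\<chi> i j. \<Sum>k\<in>UNIV. M i k * x$k$j + M j k * x$i$k)"

lemma DP:
  fixes M :: "'n::finite \<Rightarrow> 'n \<Rightarrow> real"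
  assumes H: "\<And>i k m. (\<Sum>p\<in>UNIV. M m p * c i k p) = (\<Sum>p\<in>UNIV. M p i * c p k m) + (\<Sum>p\<in>UNIV. M p k * c i p m)"
  shows "(\<Sum>e\<in>UNIV. M m e * PP c x x e j l + M j e * PP c x x m e l + M l e * PP c x x m j e)
        = PP c x (Wm M x) m j l + PP c (Wm M x) x m j l"
proof -
  have t1: "(\<Sum>e\<in>UNIV. M m e * PP c x x e j l) = (\<Sum>i\<in>UNIV. \<Sum>k\<in>UNIV. (\<Sum>p\<in>UNIV. M p i * c p k m) * x$i$j * x$k$l)
      + (\<Sum>i\<in>UNIV. \<Sum>k\<in>UNIV. (\<Sum>p\<in>UNIV. M p k * c i p m) * x$i$j * x$k$l)"
  proof -
    have "(\<Sum>e\<in>UNIV. M m e * PP c x x e j l) = (\<Sum>i\<in>UNIV. \<Sum>k\<in>UNIV. (\<Sum>e\<in>UNIV. M m e * c i k e) * x$i$j * x$k$l)"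
      unfolding PP_def sum_distrib_left sum_distrib_right
      by (subst sum.swap) (rule sum.cong[OF refl], subst sum.swap, simp add: mult_ac)
    also have "\<dots> = (\<Sum>i\<in>UNIV. \<Sum>k\<in>UNIV. (\<Sum>p\<in>UNIV. M p i * c p k m) * x$i$j * x$k$l)
      + (\<Sum>i\<in>UNIV. \<Sum>k\<in>UNIV. (\<Sum>p\<in>UNIV. M p k * c i p m) * x$i$j * x$k$l)" unfolding H by (simp add: sum.distrib distrib_right)
    finally show ?thesis .
  qed
  have r1a: "PP c x (Wm M x) m j l = (\<Sum>i\<in>UNIV. \<Sum>k\<in>UNIV. \<Sum>e\<in>UNIV. c i k m * x$i$j * (M k e * x$e$l))
      + (\<Sum>i\<in>UNIV. \<Sum>k\<in>UNIV. \<Sum>e\<in>UNIV. c i k m * x$i$j * (M l e * x$k$e))"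
    unfolding PP_def Wm_def by (simp add: sum_distrib_left distrib_left sum.distrib)
  have r1b: "(\<Sum>i\<in>UNIV. \<Sum>k\<in>UNIV. \<Sum>e\<in>UNIV. c i k m * x$i$j * (M k e * x$e$l))
     = (\<Sum>i\<in>UNIV. \<Sum>k\<in>UNIV. (\<Sum>p\<in>UNIV. M p k * c i p m) * x$i$j * x$k$l)"
    apply (rule sum.cong[OF refl])
    apply (simp only: sum_distrib_right)
    apply (rule trans, rule sum.swap)
    apply (simp add: mult_ac)
    done
  have r1c: "(\<Sum>i\<in>UNIV. \<Sum>k\<in>UNIV. \<Sum>e\<in>UNIV. c i k m * x$i$j * (M l e * x$k$e))
     = (\<Sum>e\<in>UNIV. M l e * PP c x x m j e)"
    unfolding PP_def by (simp add: sum_distrib_left mult_ac, subst (2) sum.swap, subst sum.swap, simp add: mult_ac)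
  have r2a: "PP c (Wm M x) x m j l = (\<Sum>i\<in>UNIV. \<Sum>k\<in>UNIV. \<Sum>e\<in>UNIV. c i k m * (M i e * x$e$j) * x$k$l)
      + (\<Sum>i\<in>UNIV. \<Sum>k\<in>UNIV. \<Sum>e\<in>UNIV. c i k m * (M j e * x$i$e) * x$k$l)"
    unfolding PP_def Wm_def by (simp add: sum_distrib_left sum_distrib_right distrib_left distrib_right sum.distrib)
  have r2b: "(\<Sum>i\<in>UNIV. \<Sum>k\<in>UNIV. \<Sum>e\<in>UNIV. c i k m * (M i e * x$e$j) * x$k$l)
     = (\<Sum>i\<in>UNIV. \<Sum>k\<in>UNIV. (\<Sum>p\<in>UNIV. M p i * c p k m) * x$i$j * x$k$l)"
    apply (simp only: sum_distrib_right)
    apply (rule trans, rule sum.swap)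
    apply (rule trans, rule sum.cong[OF refl], rule sum.swap)
    apply (rule trans, rule sum.swap)
    apply (simp add: mult_ac)
    done
  have r2c: "(\<Sum>i\<in>UNIV. \<Sum>k\<in>UNIV. \<Sum>e\<in>UNIV. c i k m * (M j e * x$i$e) * x$k$l)
     = (\<Sum>e\<in>UNIV. M j e * PP c x x m e l)"
    unfolding PP_def by (simp add: sum_distrib_left mult_ac, subst (2) sum.swap, subst sum.swap, simp add: mult_ac)
  show ?thesis using t1 r1a r1b r1c r2a r2b r2c by (simp add: sum.distrib)
qed

definition Dt :: "('n \<Rightarrow> 'n \<Rightarrow> real) \<Rightarrow> real^'n^'n^'n \<Rightarrow> real^'n^'n^'n" where
  "Dt M w = (\<chi> a b c. \<Sum>e\<in>UNIV. M a e * w$e$b$c + M b e * w$a$e$c + M c e * w$a$b$e)"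

definition Sb :: "('n \<Rightarrow> 'n \<Rightarrow> 'n \<Rightarrow> real) \<Rightarrow> real^'n^'n \<Rightarrow> real^'n^'n \<Rightarrow> real^'n^'n^'n" where
  "Sb cc x y = (\<chi> a b c. PP cc x y a b c - PP cc x y b a c - PP cc x y a c b - PP cc x y c b a
      + PP cc x y b c a + PP cc x y c a b)"

lemma DSb:
  fixes M :: "'n::finite \<Rightarrow> 'n \<Rightarrow> real"
  assumes H: "\<And>i k m. (\<Sum>p\<in>UNIV. M m p * cc i k p) = (\<Sum>p\<in>UNIV. M p i * cc p k m) + (\<Sum>p\<in>UNIV. M p k * cc i p m)"
  shows "Dt M (Sb cc x x) = Sb cc x (Wm M x) + Sb cc (Wm M x) x"
proof -
  have D: "\<And>m j l. (\<Sum>e\<in>UNIV. M m e * PP cc x x e j l) + (\<Sum>e\<in>UNIV. M j e * PP cc x x m e l) + (\<Sum>e\<in>UNIV. M l e * PP cc x x m j e)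
        = PP cc x (Wm M x) m j l + PP cc (Wm M x) x m j l"
    using DP[OF H] by (simp add: sum.distrib)
  show ?thesis
  proof -
    have "Dt M (Sb cc x x) $ a $ b $ c = (Sb cc x (Wm M x) + Sb cc (Wm M x) x) $ a $ b $ c" for a b c
      unfolding Dt_def Sb_def
      using D[of a b c] D[of b a c] D[of a c b] D[of c b a] D[of b c a] D[of c a b]
      by (simp add: sum.distrib sum_subtractf distrib_left right_diff_distrib)
    then show ?thesis by (simp add: vec_eq_iff)
  qed
qed

lemma cross_sw: "(\<Sum>e\<in>UNIV. (A::'n::finite\<Rightarrow>real) e * (\<Sum>f\<in>UNIV. B f * w e f)) = (\<Sum>e\<in>UNIV. B e * (\<Sum>f\<in>UNIV. A f * w f e))"
  apply (simp only: sum_distrib_left)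
  apply (rule trans, rule sum.swap)
  apply (simp add: mult_ac)
  done

lemma diag_sw: "(\<Sum>e\<in>UNIV. (A::'n::finite\<Rightarrow>real) e * (\<Sum>f\<in>UNIV. M e f * w f)) = (\<Sum>f\<in>UNIV. (\<Sum>e\<in>UNIV. A e * M e f) * w f)"
  apply (simp only: sum_distrib_left sum_distrib_right)
  apply (rule trans, rule sum.swap)
  apply (simp add: mult_ac)
  done

lemma Dcomm:
  fixes A M :: "'n::finite \<Rightarrow> 'n \<Rightarrow> real"
  shows "Dt A (Dt M w) = Dt M (Dt A w) + Dt (\<lambda>a f. \<Sum>e\<in>UNIV. A a e * M e f - M a e * A e f) w"
proof -
  have "Dt A (Dt M w) $ a $ b $ c = (Dt M (Dt A w) + Dt (\<lambda>a f. \<Sum>e\<in>UNIV. A a e * M e f - M a e * A e f) w) $ a $ b $ c" for a b c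
    unfolding Dt_def
    using cross_sw[of "A a" "M b" "\<lambda>e f. w$e$f$c"] cross_sw[of "A a" "M c" "\<lambda>e f. w$e$b$f"]
      cross_sw[of "A b" "M a" "\<lambda>e f. w$f$e$c"] cross_sw[of "A b" "M c" "\<lambda>e f. w$a$e$f"]
      cross_sw[of "A c" "M a" "\<lambda>e f. w$f$b$e"] cross_sw[of "A c" "M b" "\<lambda>e f. w$a$f$e"]
      diag_sw[of "A a" M "\<lambda>f. w$f$b$c"] diag_sw[of "A b" M "\<lambda>f. w$a$f$c"] diag_sw[of "A c" M "\<lambda>f. w$a$b$f"]
      diag_sw[of "M a" A "\<lambda>f. w$f$b$c"] diag_sw[of "M b" A "\<lambda>f. w$a$f$c"] diag_sw[of "M c" A "\<lambda>f. w$a$b$f"]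
    by (simp add: sum.distrib sum_subtractf distrib_left left_diff_distrib)
  then show ?thesis by (simp add: vec_eq_iff)
qed

lemma Dt_Lam3:
  assumes "w \<in> Lam3" shows "Dt M w \<in> Lam3"
proof -
  have s1: "\<And>p q r. w$p$q$r = - w$q$p$r" and s2: "\<And>p q r. w$p$q$r = - w$p$r$q"
    using assms unfolding Lam3_def mem_Collect_eq by blast+
  have A: "Dt M w $ a $ b $ c = - Dt M w $ b $ a $ c" for a b c
    unfolding Dt_def vec_lambda_beta sum_negf[symmetric]
  proof (rule sum.cong[OF refl])
    fix e
    show "M a e * w $ e $ b $ c + M b e * w $ a $ e $ c + M c e * w $ a $ b $ e =
         - (M b e * w $ e $ a $ c + M a e * w $ b $ e $ c + M c e * w $ b $ a $ e)"
      using s1[of e a c] s1[of b e c] s1[of b a e] by simp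
  qed
  have B: "Dt M w $ a $ b $ c = - Dt M w $ a $ c $ b" for a b c
    unfolding Dt_def vec_lambda_beta sum_negf[symmetric]
  proof (rule sum.cong[OF refl])
    fix e
    show "M a e * w $ e $ b $ c + M b e * w $ a $ e $ c + M c e * w $ a $ b $ e =
         - (M a e * w $ e $ c $ b + M c e * w $ a $ e $ b + M b e * w $ a $ c $ e)"
      using s2[of e c b] s2[of a e b] s2[of a c e] by simp
  qed
  show ?thesis unfolding Lam3_def mem_Collect_eq using A B by blast
qed

lemma schouten_13_Dt: "schouten_13 br v w = Dt (\<lambda>a e. br v (axis e 1) $ a) w"
  by (simp add: schouten_13_def Dt_def)

lemma Dt_neg: "Dt (\<lambda>a e. - A a e) w = - Dt A w"
  by (simp add: Dt_def vec_eq_iff sum_negf[symmetric] algebra_simps)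

lemma Dt_zero: "Dt A 0 = 0"
  by (simp add: Dt_def vec_eq_iff)

lemma lin_coord:
  fixes d :: "real^'n::finite \<Rightarrow> real^'m::finite"
  assumes "linear d"
  shows "d z $ i = (\<Sum>k\<in>UNIV. d (axis k 1) $ i * z $ k)"
proof -
  have "z = (\<Sum>k\<in>UNIV. z$k *\<^sub>R axis k 1)"
    using basis_expansion[of z] by (simp add: scalar_mult_eq_scaleR)
  then have "d z = (\<Sum>k\<in>UNIV. z$k *\<^sub>R d (axis k 1))"
    using assms by (metis (no_types, lifting) linear_scale linear_sum sum.cong comp_apply)
  then show ?thesis by (simp add: mult.commute)
qed

definition matd :: "(real^'n \<Rightarrow> real^'n) \<Rightarrow> 'n \<Rightarrow> 'n \<Rightarrow> real" where
  "matd d i k = d (axis k 1) $ i"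

definition adm :: "(real^'n \<Rightarrow> real^'n \<Rightarrow> real^'n) \<Rightarrow> real^'n \<Rightarrow> 'n \<Rightarrow> 'n \<Rightarrow> real" where
  "adm br v a e = br v (axis e 1) $ a"

lemma der_H:
  fixes br :: "real^'n::finite \<Rightarrow> real^'n \<Rightarrow> real^'n"
  assumes bl: "bilinear br" and d: "d \<in> derivations br"
  shows "(\<Sum>p\<in>UNIV. matd d m p * sc br i k p) = (\<Sum>p\<in>UNIV. matd d p i * sc br p k m) + (\<Sum>p\<in>UNIV. matd d p k * sc br i p m)"
proof -
  have ld: "linear d" and dd: "\<And>x y. d (br x y) = br (d x) y + br x (d y)" using d unfolding derivations_def by auto
  have l1: "linear (\<lambda>x. br x y)" for y using bl unfolding bilinear_def by auto
  have l2: "linear (\<lambda>y. br x y)" for x using bl unfolding bilinear_def by auto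
  have "(\<Sum>p\<in>UNIV. matd d m p * sc br i k p) = d (br (axis i 1) (axis k 1)) $ m"
    unfolding matd_def sc_def using lin_coord[OF ld, of "br (axis i 1) (axis k 1)" m] by simp
  also have "\<dots> = br (d (axis i 1)) (axis k 1) $ m + br (axis i 1) (d (axis k 1)) $ m"
    by (simp add: dd)
  also have "br (d (axis i 1)) (axis k 1) $ m = (\<Sum>p\<in>UNIV. matd d p i * sc br p k m)"
    using lin_coord[OF l1[of "axis k 1"], of "d (axis i 1)" m] unfolding matd_def sc_def by (simp add: mult.commute)
  also have "br (axis i 1) (d (axis k 1)) $ m = (\<Sum>p\<in>UNIV. matd d p k * sc br i p m)"
    using lin_coord[OF l2[of "axis i 1"], of "d (axis k 1)" m] unfolding matd_def sc_def by (simp add: mult.commute)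
  finally show ?thesis .
qed

lemma ad_rel:
  fixes br :: "real^'n::finite \<Rightarrow> real^'n \<Rightarrow> real^'n"
  assumes bl: "bilinear br" and d: "d \<in> derivations br"
  shows "(\<lambda>a f. \<Sum>e\<in>UNIV. adm br v a e * matd d e f - matd d a e * adm br v e f) = (\<lambda>a f. - adm br (d v) a f)"
proof (intro ext)
  fix a f
  have ld: "linear d" and dd: "\<And>x y. d (br x y) = br (d x) y + br x (d y)" using d unfolding derivations_def by auto
  have l2: "linear (\<lambda>y. br x y)" for x using bl unfolding bilinear_def by auto
  have e1: "(\<Sum>e\<in>UNIV. adm br v a e * matd d e f) = br v (d (axis f 1)) $ a"
    using lin_coord[OF l2[of v], of "d (axis f 1)" a] unfolding adm_def matd_def by simp
  have e2: "(\<Sum>e\<in>UNIV. matd d a e * adm br v e f) = d (br v (axis f 1)) $ a"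
    using lin_coord[OF ld, of "br v (axis f 1)" a] unfolding adm_def matd_def by simp
  show "(\<Sum>e\<in>UNIV. adm br v a e * matd d e f - matd d a e * adm br v e f) = - adm br (d v) a f"
    unfolding sum_subtractf e1 e2 dd by (simp add: adm_def)
qed

lemma Dt_inv3:
  fixes br :: "real^'n::finite \<Rightarrow> real^'n \<Rightarrow> real^'n"
  assumes bl: "bilinear br" and d: "d \<in> derivations br" and w: "w \<in> inv3 br"
  shows "Dt (matd d) w \<in> inv3 br"
proof -
  have wl: "w \<in> Lam3" and w0: "\<And>v. schouten_13 br v w = 0" using w unfolding inv3_def by auto
  have "schouten_13 br v (Dt (matd d) w) = 0" for v
  proof -
    have "schouten_13 br v (Dt (matd d) w) = Dt (adm br v) (Dt (matd d) w)"
      unfolding schouten_13_Dt adm_def ..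
    also have "\<dots> = Dt (matd d) (Dt (adm br v) w) + Dt (\<lambda>a f. - adm br (d v) a f) w"
      using Dcomm[of "adm br v" "matd d" w] unfolding ad_rel[OF bl d] .
    also have "Dt (adm br v) w = 0" using w0[of v] unfolding schouten_13_Dt adm_def .
    also have "Dt (\<lambda>a f. - adm br (d v) a f) w = - schouten_13 br (d v) w"
      unfolding Dt_neg schouten_13_Dt adm_def ..
    finally show ?thesis using w0[of "d v"] by (simp add: Dt_zero)
  qed
  then show ?thesis using Dt_Lam3[OF wl] unfolding inv3_def by auto
qed

lemma list_sum: "distinct bs \<Longrightarrow> (\<Sum>i<length bs. g (bs!i)) = sum g (set bs)"
  by (simp add: sum_list_distinct_conv_sum_set[symmetric] sum_list_sum_nth atLeast0LessThan)

lemma Sb_bilinear: "bilinear (Sb cc)"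
  unfolding bilinear_def
proof (intro conjI allI)
  fix x y
  show "linear (\<lambda>y. Sb cc x y)"
    by (rule linearI) (simp_all add: Sb_def PP_def vec_eq_iff sum.distrib distrib_left sum_distrib_left algebra_simps)
  show "linear (\<lambda>x. Sb cc x y)"
    by (rule linearI) (simp_all add: Sb_def PP_def vec_eq_iff sum.distrib distrib_left distrib_right sum_distrib_left algebra_simps)
qed

lemma bilinear_inner_comp: assumes "bilinear h" shows "bilinear (\<lambda>x y. U \<bullet> h x y)"
  unfolding bilinear_def using assms
  by (auto intro!: linearI simp: bilinear_ladd bilinear_radd bilinear_lmul bilinear_rmul inner_add_right)

lemma quad_deriv:
  fixes q :: "'a::euclidean_space \<Rightarrow> 'a \<Rightarrow> real"
  assumes q: "bilinear q" and l: "linear l"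
  shows "((\<lambda>x. c + l x + q x x) has_derivative (\<lambda>h. l h + (q x h + q h x))) (at x within M)"
proof -
  have bb: "bounded_bilinear q" using q bilinear_conv_bounded_bilinear by blast
  have bl: "bounded_linear l" using l linear_conv_bounded_linear by blast
  have d1: "((\<lambda>x. q x x) has_derivative (\<lambda>h. q x h + q h x)) (at x within M)"
    using bounded_bilinear.FDERIV[OF bb has_derivative_ident has_derivative_ident] .
  have d2: "(l has_derivative l) (at x within M)" using bl by (rule bounded_linear_imp_has_derivative)
  have "((\<lambda>x. c + l x + q x x) has_derivative (\<lambda>h. 0 + l h + (q x h + q h x))) (at x within M)"
    by (intro has_derivative_add has_derivative_const d1 d2)
  then show ?thesis by simp
qed

lemma quad_Ck:
  fixes q :: "'a::euclidean_space \<Rightarrow> 'a \<Rightarrow> real"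
  assumes "bilinear q" "linear l"
  shows "Ck_on k M (\<lambda>x. c + l x + q x x)"
  using assms
proof (induction k arbitrary: c l q)
  case 0
  have "\<forall>x\<in>M. continuous (at x within M) (\<lambda>x. c + l x + q x x)"
    using quad_deriv[OF 0(1,2)] has_derivative_continuous by blast
  then show ?case by (simp add: continuous_on_eq_continuous_within)
next
  case (Suc k)
  have "\<forall>v\<in>M. Ck_on k M (\<lambda>x. l v + (q x v + q v x))"
  proof
    fix v
    have lin: "linear (\<lambda>x. q x v + q v x)"
      using Suc.prems(1) by (auto intro!: linearI simp: bilinear_ladd bilinear_radd bilinear_lmul bilinear_rmul algebra_simps)
    have bz: "bilinear (\<lambda>(x::'a) (y::'a). 0::real)"
      unfolding bilinear_def by (auto intro!: linearI)
    have "Ck_on k M (\<lambda>x. l v + (\<lambda>x. q x v + q v x) x + (\<lambda>x y. 0::real) x x)"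
      by (rule Suc.IH[OF bz lin])
    then show "Ck_on k M (\<lambda>x. l v + (q x v + q v x))" by simp
  qed
  then show ?case
    using quad_deriv[OF Suc.prems(1,2)] by (auto intro!: exI[of _ "\<lambda>x h. l h + (q x h + q h x)"])
qed

lemma quad_smooth:
  fixes q :: "'a::euclidean_space \<Rightarrow> 'a \<Rightarrow> real"
  assumes "bilinear q"
  shows "smooth_on M (\<lambda>x. q x x)"
proof -
  have "Ck_on k M (\<lambda>x. 0 + (\<lambda>x. 0::real) x + q x x)" for k
    by (rule quad_Ck[OF assms]) (auto intro!: linearI)
  then show ?thesis unfolding smooth_on_def by simp
qed

lemma lie_quad:
  fixes q :: "'a::euclidean_space \<Rightarrow> 'a \<Rightarrow> real"
  assumes q: "bilinear q"
  shows "lie_deriv X (\<lambda>y. q y y) x = q x (X x) + q (X x) x"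
proof -
  let ?v = "X x"
  have e: "q (x + t *\<^sub>R ?v) (x + t *\<^sub>R ?v) = q x x + t * (q x ?v + q ?v x) + t^2 * q ?v ?v" for t
    using q by (simp add: bilinear_ladd bilinear_radd bilinear_lmul bilinear_rmul power2_eq_square algebra_simps)
  have "((\<lambda>t. q x x + t * (q x ?v + q ?v x) + t^2 * q ?v ?v) has_real_derivative (q x ?v + q ?v x)) (at 0)"
    by (auto intro!: derivative_eq_intros)
  then have "deriv (\<lambda>t. q x x + t * (q x ?v + q ?v x) + t^2 * q ?v ?v) 0 = q x ?v + q ?v x"
    by (rule DERIV_imp_deriv)
  then show ?thesis unfolding lie_deriv_def e .
qed

lemma Dt_linear: "linear (Dt M)"
  by (rule linearI) (simp_all add: Dt_def vec_eq_iff sum.distrib sum_distrib_left algebra_simps)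

lemma S_eq: "schouten_rr br r = Sb (sc br) r r"
  by (simp add: schouten_rr_def Sb_def PP_def schouten_pre_def)

lemma wedge2_eq: "wedge2 d r = Wm (matd d) r"
  by (simp add: wedge2_def Wm_def matd_def)

lemma lin_adj: "linear (u :: 'a::euclidean_space \<Rightarrow> real) \<Longrightarrow> u y = adjoint u 1 \<bullet> y"
  using adjoint_works[of u y 1] by (simp add: inner_commute)

lemma family:
  fixes br :: "real^'n::finite \<Rightarrow> real^'n \<Rightarrow> real^'n" and Z :: "(real^'n^'n^'n) set"
  assumes bl: "bilinear br" and ZD: "\<And>d w. d \<in> derivations br \<Longrightarrow> w \<in> Z \<Longrightarrow> Dt (matd d) w \<in> Z"
  shows "linear_darboux_family Lam2 (Vg br) {(\<lambda>r. u (schouten_rr br r)) | u. u \<in> annihilator Z}"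
proof -
  define W where "W = {U::real^'n^'n^'n. \<forall>w\<in>Z. U \<bullet> w = 0}"
  have sW: "subspace W" unfolding W_def subspace_def by (auto simp: inner_add_left)
  obtain B where BW: "B \<subseteq> W" and iB: "independent B" and WB: "W \<subseteq> span B" and "card B = dim W"
    by (rule basis_exists[of W])
  have fB: "finite B" using iB by (rule finiteI_independent)
  obtain bs where dbs: "distinct bs" and sbs: "set bs = B" using finite_distinct_list[OF fB] by blast
  have spB: "span B = W" using WB span_minimal[OF BW sW] by auto
  have rep: "\<exists>a. \<forall>y. V \<bullet> y = (\<Sum>i<length bs. a i * (bs!i \<bullet> y))" if "V \<in> W" for V
  proof -
    have "V \<in> range (\<lambda>u. \<Sum>v\<in>B. u v *\<^sub>R v)" using that spB span_finite[OF fB] by auto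
    then obtain u where V: "V = (\<Sum>v\<in>B. u v *\<^sub>R v)" by auto
    have "V \<bullet> y = (\<Sum>i<length bs. u (bs!i) * (bs!i \<bullet> y))" for y
    proof -
      have "V \<bullet> y = (\<Sum>v\<in>B. u v * (v \<bullet> y))" unfolding V by (simp add: inner_sum_left)
      also have "\<dots> = (\<Sum>i<length bs. u (bs!i) * (bs!i \<bullet> y))"
        using list_sum[OF dbs, of "\<lambda>v. u v * (v \<bullet> y)"] sbs by simp
      finally show ?thesis .
    qed
    then show ?thesis by (intro exI[of _ "\<lambda>i. u (bs!i)"]) simp
  qed
  have bsW: "bs!i \<in> W" if "i < length bs" for i using that sbs BW nth_mem by blast
  define fs where "fs = map (\<lambda>U r. U \<bullet> schouten_rr br r) bs"
  have lfs: "length fs = length bs" unfolding fs_def by simp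
  have fsi: "fs!i = (\<lambda>r. bs!i \<bullet> schouten_rr br r)" if "i < length bs" for i
    unfolding fs_def using that by simp
  have A: "{(\<lambda>r. u (schouten_rr br r)) | u. u \<in> annihilator Z} = {(\<lambda>x. \<Sum>i<length fs. a i * (fs!i) x) | a. True}"
  proof (intro set_eqI iffI)
    fix f assume "f \<in> {(\<lambda>r. u (schouten_rr br r)) | u. u \<in> annihilator Z}"
    then obtain u where f: "f = (\<lambda>r. u (schouten_rr br r))" and lu: "linear u" and uZ: "\<forall>w\<in>Z. u w = 0"
      unfolding annihilator_def by auto
    have "adjoint u 1 \<in> W" unfolding W_def using uZ lin_adj[OF lu] by auto
    then obtain a where a: "\<forall>y. adjoint u 1 \<bullet> y = (\<Sum>i<length bs. a i * (bs!i \<bullet> y))" using rep by blast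
    have "f = (\<lambda>x. \<Sum>i<length fs. a i * (fs!i) x)"
      unfolding f lfs using a lin_adj[OF lu] fsi by (auto intro!: ext sum.cong)
    then show "f \<in> {(\<lambda>x. \<Sum>i<length fs. a i * (fs!i) x) | a. True}"
      by (intro CollectI exI[of _ a]) simp
  next
    fix f assume "f \<in> {(\<lambda>x. \<Sum>i<length fs. a i * (fs!i) x) | a. True}"
    then obtain a where f: "f = (\<lambda>x. \<Sum>i<length fs. a i * (fs!i) x)" by blast
    define U where "U = (\<Sum>i<length bs. a i *\<^sub>R bs!i)"
    have "U \<in> span B" unfolding U_def
      by (intro span_sum span_scale span_base) (use sbs nth_mem in blast)
    then have UW: "U \<in> W" using spB by simp
    have lu: "linear (\<lambda>y. U \<bullet> y)" by (rule linearI) (simp_all add: inner_add_right)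
    have "(\<lambda>y. U \<bullet> y) \<in> annihilator Z" unfolding annihilator_def using lu UW unfolding W_def by blast
    moreover have "f = (\<lambda>r. U \<bullet> schouten_rr br r)"
    proof
      fix r
      have "U \<bullet> schouten_rr br r = (\<Sum>i<length bs. a i * (bs!i \<bullet> schouten_rr br r))"
        unfolding U_def by (simp add: inner_sum_left)
      also have "\<dots> = f r" unfolding f lfs by (rule sum.cong) (simp_all add: fsi)
      finally show "f r = U \<bullet> schouten_rr br r" by simp
    qed
    ultimately show "f \<in> {(\<lambda>r. u (schouten_rr br r)) | u. u \<in> annihilator Z}"
      by (intro CollectI exI[of _ "\<lambda>y. U \<bullet> y"]) simp
  qed
  have sm: "\<forall>f\<in>set fs. smooth_on Lam2 f"
  proof
    fix f assume "f \<in> set fs"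
    then obtain U where f: "f = (\<lambda>r. U \<bullet> schouten_rr br r)" unfolding fs_def by auto
    show "smooth_on Lam2 f" unfolding f S_eq
      using quad_smooth[OF bilinear_inner_comp[OF Sb_bilinear, of U "sc br"]] by simp
  qed
  have cof: "\<forall>X\<in>Vg br. \<forall>j<length fs. \<exists>h :: nat \<Rightarrow> real.
          \<forall>x\<in>Lam2. lie_deriv X (fs!j) x = (\<Sum>i<length fs. h i * (fs!i) x)"
  proof (intro ballI allI impI)
    fix X j assume "X \<in> Vg br" and j: "j < length fs"
    then obtain d where d: "d \<in> derivations br" and X: "X = (\<lambda>r. wedge2 d r)" unfolding Vg_def by auto
    define U where "U = bs!j"
    have UW: "U \<in> W" unfolding U_def using bsW j lfs by auto
    have H: "\<And>i k m. (\<Sum>p\<in>UNIV. matd d m p * sc br i k p) = (\<Sum>p\<in>UNIV. matd d p i * sc br p k m) + (\<Sum>p\<in>UNIV. matd d p k * sc br i p m)"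
      using der_H[OF bl d] .
    have ld: "lie_deriv X (fs!j) x = U \<bullet> Dt (matd d) (schouten_rr br x)" for x
    proof -
      have "lie_deriv X (fs!j) x = lie_deriv X (\<lambda>y. U \<bullet> Sb (sc br) y y) x"
        using fsi[of j] j lfs unfolding U_def S_eq by simp
      also have "\<dots> = U \<bullet> Sb (sc br) x (X x) + U \<bullet> Sb (sc br) (X x) x"
        by (rule lie_quad[OF bilinear_inner_comp[OF Sb_bilinear]])
      also have "\<dots> = U \<bullet> Dt (matd d) (schouten_rr br x)"
        unfolding S_eq DSb[OF H] X wedge2_eq by (simp add: inner_add_right)
      finally show ?thesis .
    qed
    define u where "u = (\<lambda>y. U \<bullet> Dt (matd d) y)"
    have lu: "linear u" unfolding u_def
      by (rule linearI) (simp_all add: linear_add[OF Dt_linear] linear_scale[OF Dt_linear] inner_add_right)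
    have "adjoint u 1 \<in> W" unfolding W_def
    proof (rule CollectI, rule ballI)
      fix w assume "w \<in> Z"
      then have "Dt (matd d) w \<in> Z" by (rule ZD[OF d])
      then show "adjoint u 1 \<bullet> w = 0" using lin_adj[OF lu, of w] UW unfolding W_def u_def by auto
    qed
    then obtain h where h: "\<forall>y. adjoint u 1 \<bullet> y = (\<Sum>i<length bs. h i * (bs!i \<bullet> y))" using rep by blast
    have "\<forall>x\<in>Lam2. lie_deriv X (fs!j) x = (\<Sum>i<length fs. h i * (fs!i) x)"
    proof
      fix x
      have "lie_deriv X (fs!j) x = u (schouten_rr br x)" using ld unfolding u_def .
      also have "\<dots> = adjoint u 1 \<bullet> schouten_rr br x" by (rule lin_adj[OF lu])
      also have "\<dots> = (\<Sum>i<length bs. h i * (bs!i \<bullet> schouten_rr br x))" using h by blast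
      also have "\<dots> = (\<Sum>i<length fs. h i * (fs!i) x)" using fsi lfs by (auto intro!: sum.cong)
      finally show "lie_deriv X (fs!j) x = (\<Sum>i<length fs. h i * (fs!i) x)" .
    qed
    then show "\<exists>h :: nat \<Rightarrow> real. \<forall>x\<in>Lam2. lie_deriv X (fs!j) x = (\<Sum>i<length fs. h i * (fs!i) x)" by blast
  qed
  show ?thesis unfolding linear_darboux_family_def using A sm cof by blast
qed

lemma Lam3_add:
  assumes x: "x \<in> Lam3" and y: "y \<in> Lam3" shows "x + y \<in> Lam3"
proof -
  have "(x+y)$a$b$c = - (x+y)$b$a$c \<and> (x+y)$a$b$c = - (x+y)$a$c$b" for a b c
  proof -
    have "x$a$b$c = - x$b$a$c" "x$a$b$c = - x$a$c$b" "y$a$b$c = - y$b$a$c" "y$a$b$c = - y$a$c$b"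
      using x y unfolding Lam3_def mem_Collect_eq by blast+
    then show ?thesis by simp
  qed
  then show ?thesis unfolding Lam3_def mem_Collect_eq by blast
qed

lemma Lam3_scale:
  assumes x: "x \<in> Lam3" shows "c *\<^sub>R x \<in> Lam3"
proof -
  have "(c *\<^sub>R x)$a$b$e = - (c *\<^sub>R x)$b$a$e \<and> (c *\<^sub>R x)$a$b$e = - (c *\<^sub>R x)$a$e$b" for a b e
  proof -
    have "x$a$b$e = - x$b$a$e" "x$a$b$e = - x$a$e$b"
      using x unfolding Lam3_def mem_Collect_eq by blast+
    then show ?thesis by simp
  qed
  then show ?thesis unfolding Lam3_def mem_Collect_eq by blast
qed

lemma inv3_subspace: "subspace (inv3 br)"
proof -
  have z: "0 \<in> Lam3" unfolding Lam3_def by simp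
  show ?thesis unfolding subspace_def inv3_def
    using z Lam3_add Lam3_scale
    by (auto simp: schouten_13_Dt Dt_zero linear_add[OF Dt_linear] linear_scale[OF Dt_linear])
qed

lemma locus_gen:
  fixes S :: "'a \<Rightarrow> real^'n::finite^'n^'n"
  assumes sub: "subspace Z"
  shows "locus M {(\<lambda>r. u (S r)) | u. u \<in> annihilator Z} = {x \<in> M. S x \<in> Z}"
proof (intro set_eqI iffI)
  fix x assume "x \<in> locus M {(\<lambda>r. u (S r)) | u. u \<in> annihilator Z}"
  then have xM: "x \<in> M" and all: "\<And>f. f \<in> {(\<lambda>r. u (S r)) | u. u \<in> annihilator Z} \<Longrightarrow> f x = 0"
    unfolding locus_def by auto
  have sp: "span Z = Z" using sub by (simp add: span_eq_iff)
  obtain y z where y: "y \<in> span Z" and z: "\<And>w. w \<in> span Z \<Longrightarrow> orthogonal z w" and e: "S x = y + z"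
    using orthogonal_subspace_decomp_exists[of Z "S x"] by blast
  have lz: "linear (\<lambda>w. z \<bullet> w)" by (rule linearI) (simp_all add: inner_add_right)
  have "(\<lambda>w. z \<bullet> w) \<in> annihilator Z"
    unfolding annihilator_def using lz z sp by (auto simp: orthogonal_def)
  then have "(\<lambda>r. z \<bullet> S r) \<in> {(\<lambda>r. u (S r)) | u. u \<in> annihilator Z}"
    by (intro CollectI exI[of _ "\<lambda>w. z \<bullet> w"]) simp
  from all[OF this] have "z \<bullet> S x = 0" .
  moreover have "z \<bullet> y = 0" using z[OF y] by (simp add: orthogonal_def)
  ultimately have "z \<bullet> z = 0" unfolding e by (simp add: inner_add_right)
  then have "z = 0" by simp
  then have "S x \<in> Z" using e y sp by simp
  then show "x \<in> {x \<in> M. S x \<in> Z}" using xM by simp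
next
  fix x assume x: "x \<in> {x \<in> M. S x \<in> Z}"
  show "x \<in> locus M {(\<lambda>r. u (S r)) | u. u \<in> annihilator Z}"
    unfolding locus_def annihilator_def using x by auto
qed

theorem proposition5p3:
  fixes br :: "real^'n \<Rightarrow> real^'n \<Rightarrow> real^'n"
  assumes "lie_algebra br"
  shows "linear_darboux_family Lam2 (Vg br)
           {(\<lambda>r. u (schouten_rr br r)) | u. u \<in> annihilator (inv3 br)}
       \<and> locus Lam2 {(\<lambda>r. u (schouten_rr br r)) | u. u \<in> annihilator (inv3 br)} = r_matrices br
       \<and> linear_darboux_family Lam2 (Vg br)
           {(\<lambda>r. \<xi> (schouten_rr br r)) | \<xi>. linear \<xi>}
       \<and> locus Lam2 {(\<lambda>r. \<xi> (schouten_rr br r)) | \<xi>. linear \<xi>} = {r \<in> Lam2. schouten_rr br r = 0}"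
proof -
  have bl: "bilinear br" using assms unfolding lie_algebra_def by blast
  have eq2: "{(\<lambda>r. \<xi> (schouten_rr br r)) | \<xi>. linear \<xi>} = {(\<lambda>r. u (schouten_rr br r)) | u. u \<in> annihilator {0}}"
    unfolding annihilator_def by (auto simp: linear_0)
  have f1: "linear_darboux_family Lam2 (Vg br) {(\<lambda>r. u (schouten_rr br r)) | u. u \<in> annihilator (inv3 br)}"
    by (rule family[OF bl Dt_inv3[OF bl]])
  have f2: "linear_darboux_family Lam2 (Vg br) {(\<lambda>r. u (schouten_rr br r)) | u. u \<in> annihilator {0}}"
    by (rule family[OF bl]) (simp add: Dt_zero)
  have l1: "locus Lam2 {(\<lambda>r. u (schouten_rr br r)) | u. u \<in> annihilator (inv3 br)} = r_matrices br"
    unfolding locus_gen[OF inv3_subspace] r_matrices_def ..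
  have l2: "locus Lam2 {(\<lambda>r. u (schouten_rr br r)) | u. u \<in> annihilator {0}} = {r \<in> Lam2. schouten_rr br r = 0}"
    using locus_gen[OF subspace_single_0] by simp
  show ?thesis using f1 f2 l1 l2 eq2 by simp
qed
end
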